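(* Let $\arctan$ denote the principal branch of the inverse tangent on $\mathbb{C}\setminus\big((-i\infty,-i]\cup[i,i\infty)\big)$ with $\arctan 0=0$. For every $n\in\mathbb{N}$ and every $z$ in this domain with $z\neq0$, \[ (\arctan z)^{(n)}=\frac{(n-1)!}{(2z)^{n-1}}\sum_{k=0}^{n-1}(-1)^k\binom{k}{n-k-1}\frac{(2z)^{2k}}{(1+z^2)^{k+1}}. \] Moreover, \[ \frac{\arctan z}{z}=\sum_{n=0}^{\infty}(-1)^n\Big[\frac{\pi}{4}+T(n)\Big](z-1)^n,\qquad |z-1|<\sqrt2, \] where $T(0)=0$ and $T(n)=\sum_{k=1}^{n}\frac{(-1)^k}{2^{k/2}k}\sin\frac{3k\pi}{4}$ for $n\ge1$.
   Context: Ordinary binomial coefficients, with $\binom{k}{j}=0$ if $j>k$. *)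

theory Defs
  imports "HOL-Analysis.Analysis"
begin

definition T :: "nat \<Rightarrow> real" where
  "T n = (\<Sum>k=1..n. (-1)^k / (2 powr (real k / 2) * real k) * sin (3 * real k * pi / 4))"

(* arctan z / z, with its removable singularity at z = 0 filled in by the limit value 1 *)
definition arctan_div :: "complex \<Rightarrow> complex" where
  "arctan_div z = (if z = 0 then 1 else Arctan z / z)"

end

theory Submission
  imports Defs "HOL-Complex_Analysis.Complex_Analysis"
begin

definition DD :: "nat \<Rightarrow> complex \<Rightarrow> complex" where
  "DD m z = (-1)^m / (2*\<i>) * (inverse (z - \<i>) ^ (m+1) - inverse (z + \<i>) ^ (m+1))"

definition SS :: "complex set" where "SS = {z. Re z = 0 \<longrightarrow> \<bar>Im z\<bar> < 1}"

lemma open_SS: "open SS"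
proof -
  have e: "SS = - ({z. Re z = 0} \<inter> {z. \<bar>Im z\<bar> \<ge> 1})" by (auto simp: SS_def)
  have c: "closed ({z. Re z = 0} \<inter> {z. \<bar>Im z\<bar> \<ge> 1})"
    by (intro closed_Int closed_Collect_le closed_Collect_eq continuous_intros)
  show ?thesis by (subst e, rule open_Compl[OF c])
qed

lemma SS_ne: assumes "z \<in> SS" shows "z \<noteq> \<i>" "z \<noteq> -\<i>" "z - \<i> \<noteq> 0" "z + \<i> \<noteq> 0" "1 + z^2 \<noteq> 0"
proof -
  show a: "z \<noteq> \<i>" "z \<noteq> -\<i>" using assms by (auto simp: SS_def)
  show b: "z - \<i> \<noteq> 0" using a by auto
  show c: "z + \<i> \<noteq> 0"
  proof
    assume "z + \<i> = 0" hence "z = -\<i>" by (simp add: eq_neg_iff_add_eq_0)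
    with a show False by simp
  qed
  have "1 + z^2 = (z - \<i>) * (z + \<i>)" by (simp add: algebra_simps power2_eq_square)
  then show "1 + z^2 \<noteq> 0" using b c by simp
qed

lemma DD0: assumes "z \<in> SS" shows "DD 0 z = inverse (1 + z^2)"
proof -
  have "1 + z^2 = (z - \<i>) * (z + \<i>)" by (simp add: algebra_simps power2_eq_square)
  then show ?thesis using SS_ne[OF assms] unfolding DD_def
    by (simp add: field_simps)
qed

lemma deriv_invpow: assumes "z \<noteq> a"
  shows "((\<lambda>w. inverse (w - a) ^ Suc m) has_field_derivative - (of_nat (Suc m) * inverse (z - a) ^ Suc (Suc m))) (at z)"
proof -
  have d1: "((\<lambda>w. w - a) has_field_derivative 1) (at z)"
    by (rule DERIV_cong[OF DERIV_diff[OF DERIV_ident DERIV_const]]) simp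
  have d2: "((\<lambda>w. inverse (w - a)) has_field_derivative - (1 * inverse ((z - a) ^ Suc (Suc 0)))) (at z)"
    by (rule DERIV_inverse_fun[OF d1]) (use assms in simp)
  show ?thesis
    apply (rule DERIV_cong[OF DERIV_power[OF d2]])
    by (simp add: power_inverse)
qed

lemma deriv_DD: assumes "z \<in> SS"
  shows "((\<lambda>w. fact m * DD m w) has_field_derivative fact (Suc m) * DD (Suc m) z) (at z)"
proof -
  note ne = SS_ne[OF assms]
  have h: "((\<lambda>w. fact m * DD m w) has_field_derivative fact m * ((-1)^m / (2*\<i>) *
     (- (of_nat (Suc m) * inverse (z - \<i>) ^ Suc (Suc m)) - - (of_nat (Suc m) * inverse (z + \<i>) ^ Suc (Suc m))))) (at z)"
    unfolding DD_def
    apply (intro DERIV_cmult DERIV_diff)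
    using deriv_invpow[of z "\<i>" m] deriv_invpow[of z "-\<i>" m] ne by auto
  have eq: "\<And>P Q. fact m * ((-1)^m / (2*\<i>) * (- (of_nat (Suc m) * P ^ Suc (Suc m)) - - (of_nat (Suc m) * Q ^ Suc (Suc m))))
     = fact (Suc m) * ((-1)^(Suc m) / (2*\<i>) * (P ^ (Suc m + 1) - Q ^ (Suc m + 1)))"
    by (simp add: field_simps)
  show ?thesis
    unfolding DD_def by (rule DERIV_cong[OF h[unfolded DD_def] eq])
qed

lemma higher_Arctan: "z \<in> SS \<Longrightarrow> (deriv ^^ Suc m) Arctan z = fact m * DD m z"
proof (induction m arbitrary: z)
  case 0
  then show ?case using has_field_derivative_Arctan[of z] DD0[of z]
    by (auto simp: SS_def intro!: DERIV_imp_deriv)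
next
  case (Suc m)
  have ev: "eventually (\<lambda>w. (deriv ^^ Suc m) Arctan w = fact m * DD m w) (nhds z)"
    using eventually_nhds_in_open[OF open_SS Suc.prems] by (rule eventually_mono) (use Suc.IH in auto)
  have "(deriv ^^ Suc (Suc m)) Arctan z = deriv ((deriv ^^ Suc m) Arctan) z" by simp
  also have "\<dots> = deriv (\<lambda>w. fact m * DD m w) z" by (rule deriv_cong_ev[OF ev refl])
  also have "\<dots> = fact (Suc m) * DD (Suc m) z" by (rule DERIV_imp_deriv[OF deriv_DD[OF Suc.prems]])
  finally show ?case .
qed


definition AA :: "nat \<Rightarrow> complex \<Rightarrow> complex" where
  "AA m t = (\<Sum>k=0..m. of_nat (k choose (m - k)) * t ^ k)"

lemma AA_rec: "AA (Suc (Suc m)) t = t * (AA (Suc m) t + AA m t)"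
proof -
  have "AA (Suc (Suc m)) t = (\<Sum>j=0..Suc m. of_nat (Suc j choose (Suc m - j)) * t ^ Suc j)"
    unfolding AA_def by (subst sum.atLeast0_atMost_Suc_shift) simp
  also have "\<dots> = (\<Sum>j=0..m. of_nat (Suc j choose (Suc m - j)) * t ^ Suc j) + t ^ Suc (Suc m)"
    by (simp add: sum.atLeast0_atMost_Suc)
  also have "(\<Sum>j=0..m. of_nat (Suc j choose (Suc m - j)) * t ^ Suc j)
     = (\<Sum>j=0..m. t * (of_nat (j choose (Suc m - j)) * t ^ j) + t * (of_nat (j choose (m - j)) * t ^ j))"
  proof (rule sum.cong[OF refl])
    fix j assume "j \<in> {0..m}"
    then have "Suc m - j = Suc (m - j)" by auto
    then show "of_nat (Suc j choose (Suc m - j)) * t ^ Suc j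
       = t * (of_nat (j choose (Suc m - j)) * t ^ j) + t * (of_nat (j choose (m - j)) * t ^ j)"
      by (simp add: algebra_simps)
  qed
  also have "\<dots> + t ^ Suc (Suc m) = t * (AA (Suc m) t + AA m t)"
    unfolding AA_def
    by (simp add: sum.distrib sum_distrib_left sum.atLeast0_atMost_Suc algebra_simps)
  finally show ?thesis .
qed

lemma DD_rec_gen: "DD (Suc (Suc m)) z = - (inverse (z - \<i>) + inverse (z + \<i>)) * DD (Suc m) z
   - inverse (z - \<i>) * inverse (z + \<i>) * DD m z"
proof -
  have r: "\<And>c P Q::complex. c * (P^(Suc(Suc m)+1) - Q^(Suc(Suc m)+1)) = - (P+Q) * (- c * (P^(Suc m+1) - Q^(Suc m+1))) - P*Q*(c*(P^(m+1)-Q^(m+1)))"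
    by (simp add: algebra_simps)
  have s: "(-1::complex)^Suc(Suc m)/(2*\<i>) = (-1)^m/(2*\<i>)" "(-1::complex)^Suc m/(2*\<i>) = - ((-1)^m/(2*\<i>))"
    by simp_all
  show ?thesis unfolding DD_def s by (rule r)
qed

lemma DD1_gen: "DD (Suc 0) z = - (inverse (z - \<i>) + inverse (z + \<i>)) * DD 0 z"
proof -
  have r: "\<And>c P Q::complex. - c * (P^(Suc 0+1) - Q^(Suc 0+1)) = - (P+Q) * (c * (P^(0+1) - Q^(0+1)))"
    by (simp add: algebra_simps power2_eq_square)
  have s: "(-1::complex)^Suc 0/(2*\<i>) = - (1/(2*\<i>))" "(-1::complex)^0/(2*\<i>) = 1/(2*\<i>)"
    by simp_all
  show ?thesis unfolding DD_def s by (rule r)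
qed

lemma PQ: assumes "z \<in> SS"
  shows "inverse (z - \<i>) + inverse (z + \<i>) = 2 * z / (1 + z^2)"
    "inverse (z - \<i>) * inverse (z + \<i>) = 1 / (1 + z^2)"
proof -
  note ne = SS_ne[OF assms]
  have u: "1 + z^2 = (z - \<i>) * (z + \<i>)" by (simp add: algebra_simps power2_eq_square)
  show "inverse (z - \<i>) + inverse (z + \<i>) = 2 * z / (1 + z^2)"
    unfolding u using ne by (simp add: field_simps)
  show "inverse (z - \<i>) * inverse (z + \<i>) = 1 / (1 + z^2)"
    unfolding u using ne by (simp add: field_simps)
qed

lemma EE: assumes "z \<in> SS"
  shows "AA m (- ((2*z)^2) / (1 + z^2)) = (2*z)^m * (1 + z^2) * DD m z"
proof -
  note ne = SS_ne[OF assms]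
  define t where "t = - ((2*z)^2) / (1 + z^2)"
  have "AA m t = (2*z)^m * (1 + z^2) * DD m z \<and> AA (Suc m) t = (2*z)^(Suc m) * (1 + z^2) * DD (Suc m) z"
  proof (induction m)
    case 0
    have a0: "AA 0 t = 1" by (simp add: AA_def)
    have a1: "AA (Suc 0) t = t" by (simp add: AA_def)
    have g: "\<And>u::complex. u \<noteq> 0 \<Longrightarrow> - ((2*z)^2) / u = (2*z)^Suc 0 * u * (- (2 * z / u) * inverse u)"
      by (simp add: field_simps power2_eq_square)
    show ?case
      unfolding a0 a1 DD1_gen DD0[OF assms] PQ[OF assms] unfolding t_def
      using ne(5) g by simp
  next
    case (Suc m)
    have g2: "\<And>w u D0 D1 A0 A1::complex. u \<noteq> 0 \<Longrightarrow> A0 = w^m*u*D0 \<Longrightarrow> A1 = w^(Suc m)*u*D1 \<Longrightarrow>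
       - (w^2) / u * (A1 + A0) = w^(Suc (Suc m)) * u * (- (w / u) * D1 - 1 / u * D0)"
      by (simp add: field_simps power2_eq_square)
    have "AA (Suc (Suc m)) t = t * (AA (Suc m) t + AA m t)" by (rule AA_rec)
    also have "\<dots> = (2*z)^(Suc (Suc m)) * (1 + z^2) * (- (2*z / (1 + z^2)) * DD (Suc m) z - 1 / (1 + z^2) * DD m z)"
      by (rule g2[OF ne(5) conjunct1[OF Suc.IH] conjunct2[OF Suc.IH], folded t_def])
    also have "\<dots> = (2*z)^(Suc (Suc m)) * (1 + z^2) * DD (Suc (Suc m)) z"
      by (simp only: DD_rec_gen PQ[OF assms])
    finally show ?case using Suc.IH by simp
  qed
  then show ?thesis unfolding t_def by simp
qed

lemma term_eq:
  fixes c w u :: complex assumes u: "u \<noteq> 0"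
  shows "(-1)^k * c * w ^ (2 * k) / u ^ (k + 1) = c * (- (w^2) / u) ^ k / u"
proof -
  have "(- (w^2) / u) ^ k = (-1)^k * w ^ (2 * k) / u ^ k"
  proof -
    have "- (w^2) / u = (-1) * (w^2 / u)" by simp
    then show ?thesis by (simp only: power_mult_distrib power_divide power_mult) simp
  qed
  moreover have "u ^ (k + 1) = u ^ k * u" by simp
  ultimately show ?thesis by (simp add: mult.commute mult.left_commute)
qed

lemma sum_DD: assumes "z \<in> SS"
  shows "(\<Sum>k=0..m. (-1)^k * of_nat (k choose (m - k)) * (2 * z) ^ (2 * k) / (1 + z\<^sup>2) ^ (k + 1))
     = (2*z)^m * DD m z"
proof -
  note ne = SS_ne[OF assms]
  have "(\<Sum>k=0..m. (-1)^k * of_nat (k choose (m - k)) * (2 * z) ^ (2 * k) / (1 + z\<^sup>2) ^ (k + 1))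
     = (\<Sum>k=0..m. of_nat (k choose (m - k)) * (- ((2*z)^2) / (1 + z^2)) ^ k / (1 + z^2))"
    by (rule sum.cong[OF refl], rule term_eq[OF ne(5)])
  also have "\<dots> = AA m (- ((2*z)^2) / (1 + z^2)) / (1 + z^2)"
    unfolding AA_def by (rule sum_divide_distrib[symmetric])
  also have "\<dots> = (2*z)^m * DD m z"
    unfolding EE[OF assms] using ne(5) by simp
  finally show ?thesis .
qed

lemma ball_SS: "ball 1 (sqrt 2) \<subseteq> SS"
proof
  fix z :: complex assume "z \<in> ball 1 (sqrt 2)"
  then have d: "cmod (1 - z) < sqrt 2" by (simp add: dist_norm)
  show "z \<in> SS" unfolding SS_def
  proof (intro CollectI impI)
    assume r: "Re z = 0"
    have "cmod (1 - z) = sqrt (1 + (Im z)^2)" using r by (simp add: cmod_def)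
    with d have "1 + (Im z)^2 < 2" by simp
    then have "(Im z)^2 < 1^2" by simp
    then show "\<bar>Im z\<bar> < 1" using abs_less_iff power2_less_imp_less by (metis abs_ge_zero power2_abs zero_less_one le_less)
  qed
qed

lemma arctan_div_lim: "(arctan_div \<longlongrightarrow> arctan_div 0) (at 0)"
proof -
  have "(Arctan has_field_derivative inverse (1 + 0\<^sup>2)) (at 0)"
    by (rule has_field_derivative_Arctan) simp
  then have d: "((\<lambda>y. (Arctan y - Arctan 0) / (y - 0)) \<longlongrightarrow> inverse (1 + 0\<^sup>2)) (at 0)"
    by (simp only: has_field_derivative_iff)
  have ev: "eventually (\<lambda>y. (Arctan y - Arctan 0) / (y - 0) = arctan_div y) (at (0::complex))"
    using eventually_neq_at_within[of 0 0 UNIV] by (rule eventually_mono) (simp add: arctan_div_def)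
  have "(arctan_div \<longlongrightarrow> inverse (1 + 0\<^sup>2)) (at 0)"
    using d by (simp only: tendsto_cong[OF ev])
  then show ?thesis by (simp add: arctan_div_def)
qed

lemma holo_arctan_div: "arctan_div holomorphic_on ball 1 (sqrt 2)"
proof (rule no_isolated_singularity'[where K = "{0}"])
  show "(arctan_div \<longlongrightarrow> arctan_div z) (at z within ball 1 (sqrt 2))" if "z \<in> {0}" for z
    using that arctan_div_lim tendsto_within_subset by fastforce
  have "(\<lambda>w. Arctan w / w) holomorphic_on (ball 1 (sqrt 2) - {0})"
    by (intro holomorphic_on_divide holomorphic_on_Arctan holomorphic_on_ident)
       (use ball_SS in \<open>auto simp: SS_def\<close>)
  then show "arctan_div holomorphic_on (ball 1 (sqrt 2) - {0})"
    by (rule holomorphic_transform) (auto simp: arctan_div_def)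
qed auto

lemma arctan_div_mult: "(\<lambda>w. w * arctan_div w) = Arctan"
  by (auto simp: arctan_div_def fun_eq_iff)

lemma leibniz: "(deriv ^^ Suc k) Arctan 1 = (deriv ^^ Suc k) arctan_div 1 + of_nat (Suc k) * (deriv ^^ k) arctan_div 1"
proof -
  have one: "(1::complex) \<in> ball 1 (sqrt 2)" by simp
  have "(deriv ^^ Suc k) Arctan 1 = (deriv ^^ Suc k) (\<lambda>w. w * arctan_div w) 1"
    by (simp add: arctan_div_mult)
  also have "\<dots> = (\<Sum>i = 0..Suc k. of_nat (Suc k choose i) * (deriv ^^ i) (\<lambda>w. w) 1 * (deriv ^^ (Suc k - i)) arctan_div 1)"
    by (rule higher_deriv_mult[OF holomorphic_on_ident holo_arctan_div open_ball one])
  also have "\<dots> = (\<Sum>i \<in> {0, 1}. of_nat (Suc k choose i) * (deriv ^^ i) (\<lambda>w. w) 1 * (deriv ^^ (Suc k - i)) arctan_div 1)"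
    by (rule sum.mono_neutral_right) auto
  also have "\<dots> = (deriv ^^ Suc k) arctan_div 1 + of_nat (Suc k) * (deriv ^^ k) arctan_div 1"
    by simp
  finally show ?thesis .
qed

lemma inv_1mi: "inverse (1 - \<i>) = complex_of_real (inverse (sqrt 2)) * cis (pi/4)"
proof -
  have "inverse (1 - \<i>) = (1 + \<i>) / 2"
    by (rule inverse_unique) (simp add: algebra_simps)
  then show ?thesis by (simp add: complex_eq_iff cos_45 sin_45)
qed

lemma inv_1pi: "inverse (1 + \<i>) = complex_of_real (inverse (sqrt 2)) * cis (- (pi/4))"
proof -
  have "inverse (1 + \<i>) = (1 - \<i>) / 2"
    by (rule inverse_unique) (simp add: algebra_simps)
  then show ?thesis by (simp add: complex_eq_iff cos_45 sin_45)
qed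

lemma cis_diff: "cis x - cis (- x) = 2 * \<i> * complex_of_real (sin x)"
  by (simp add: complex_eq_iff)

lemma DD_at_1: "DD k 1 = complex_of_real (sin (3 * real (Suc k) * pi / 4) / 2 powr (real (Suc k) / 2))"
proof -
  define j where "j = Suc k"
  have p: "2 powr (real j / 2) = sqrt 2 ^ j"
  proof -
    have "2 powr (real j / 2) = (2 powr (1/2)) powr real j" by (simp add: powr_powr)
    also have "\<dots> = sqrt 2 ^ j" by (simp add: powr_half_sqrt powr_realpow)
    finally show ?thesis .
  qed
  have jj: "k + 1 = j" by (simp add: j_def)
  have s: "sin (3 * real j * pi / 4) = (-1)^k * sin (real j * pi / 4)"
  proof -
    have a: "3 * real j * pi / 4 = real j * pi - real j * pi / 4" by simp
    have "sin (3 * real j * pi / 4) = sin (real j * pi - real j * pi / 4)" by (simp only: a)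
    also have "\<dots> = - cos (real j * pi) * sin (real j * pi / 4)"
      by (simp only: sin_diff sin_npi)
    finally have "sin (3 * real j * pi / 4) = - cos (real j * pi) * sin (real j * pi / 4)" .
    moreover have "cos (real j * pi) = - ((-1)^k)" unfolding j_def by (simp only: cos_npi) simp
    ultimately show ?thesis by simp
  qed
  have "DD k 1 = (-1)^k / (2*\<i>) * (complex_of_real (inverse (sqrt 2)) ^ j * (cis (real j * (pi/4)) - cis (- (real j * (pi/4)))))"
    unfolding DD_def inv_1mi inv_1pi jj power_mult_distrib Complex.DeMoivre
    by (simp add: algebra_simps)
  also have "\<dots> = complex_of_real ((-1)^k * sin (real j * pi / 4) / sqrt 2 ^ j)"
    unfolding cis_diff by (simp add: field_simps power_inverse)
  finally show ?thesis using p s j_def by simp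
qed

lemma T_Suc: "T (Suc k) = T k + (-1)^Suc k / (2 powr (real (Suc k) / 2) * real (Suc k)) * sin (3 * real (Suc k) * pi / 4)"
  unfolding T_def by simp

lemma coeffs: "(deriv ^^ n) arctan_div 1 / fact n = (-1)^n * complex_of_real (pi / 4 + T n)"
proof (induction n)
  case 0
  have "Arctan 1 = complex_of_real (pi/4)" using Arctan_of_real[of 1] by (simp add: arctan_one)
  then show ?case by (simp add: arctan_div_def T_def)
next
  case (Suc k)
  have "(1::complex) \<in> SS" by (simp add: SS_def)
  from leibniz[of k] higher_Arctan[OF this, of k]
  have e: "(deriv ^^ Suc k) arctan_div 1 = fact k * DD k 1 - of_nat (Suc k) * (deriv ^^ k) arctan_div 1"
    by (metis add_diff_cancel_right')
  have "(deriv ^^ Suc k) arctan_div 1 / fact (Suc k) = DD k 1 / of_nat (Suc k) - (deriv ^^ k) arctan_div 1 / fact k"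
  proof -
    have f: "(fact k :: complex) \<noteq> 0" "(1 + of_nat k :: complex) \<noteq> 0"
      by simp (metis of_nat_Suc of_nat_eq_0_iff nat.distinct(1))
    show ?thesis unfolding e using f by (simp add: field_simps)
  qed
  also have "\<dots> = (-1) ^ Suc k * complex_of_real (pi / 4 + T (Suc k))"
    unfolding Suc.IH DD_at_1 T_Suc
    by (simp add: field_simps)
  finally show ?case .
qed

theorem theorem3p1:
  shows "(\<forall>n::nat. \<forall>z::complex. n \<ge> 1 \<longrightarrow> (Re z = 0 \<longrightarrow> \<bar>Im z\<bar> < 1) \<longrightarrow> z \<noteq> 0 \<longrightarrow>
            (deriv ^^ n) Arctan z =
              of_nat (fact (n - 1)) / (2 * z) ^ (n - 1) *
              (\<Sum>k=0..n-1. (-1)^k * of_nat (k choose (n - k - 1)) *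
                 (2 * z) ^ (2 * k) / (1 + z\<^sup>2) ^ (k + 1)))
       \<and> (\<forall>z::complex. cmod (z - 1) < sqrt 2 \<longrightarrow>
            (\<lambda>n. (-1)^n * complex_of_real (pi / 4 + T n) * (z - 1) ^ n) sums arctan_div z)"
proof (intro conjI allI impI)
  fix n :: nat and z :: complex
  assume n: "n \<ge> 1" and zS: "Re z = 0 \<longrightarrow> \<bar>Im z\<bar> < 1" and z0: "z \<noteq> 0"
  obtain m where m: "n = Suc m" using n by (cases n) auto
  have zS': "z \<in> SS" using zS by (simp add: SS_def)
  have e1: "(\<Sum>k=0..n-1. (-1)^k * of_nat (k choose (n - k - 1)) *
                 (2 * z) ^ (2 * k) / (1 + z\<^sup>2) ^ (k + 1)) = (2*z)^m * DD m z"
    unfolding m using sum_DD[OF zS', of m] by simp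
  have h: "(deriv ^^ n) Arctan z = fact m * DD m z" unfolding m by (rule higher_Arctan[OF zS'])
  have nz: "(2*z)^m \<noteq> 0" using z0 by simp
  show "(deriv ^^ n) Arctan z =
              of_nat (fact (n - 1)) / (2 * z) ^ (n - 1) *
              (\<Sum>k=0..n-1. (-1)^k * of_nat (k choose (n - k - 1)) *
                 (2 * z) ^ (2 * k) / (1 + z\<^sup>2) ^ (k + 1))"
    unfolding e1 h using nz z0 by (simp add: m)
next
  fix z :: complex
  assume "cmod (z - 1) < sqrt 2"
  then have "z \<in> ball 1 (sqrt 2)" by (simp add: dist_norm norm_minus_commute)
  from holomorphic_power_series[OF holo_arctan_div this]
  show "(\<lambda>n. (-1)^n * complex_of_real (pi / 4 + T n) * (z - 1) ^ n) sums arctan_div z"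
    by (simp add: coeffs)
qed

end
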